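(* Let $\mu$ be a distribution over $\{0,1\}^V$ and $\theta\in(0,1)$. Let $(X^{(t)}_{\pi\text{-GD}})_{t\ge0}$ be the Glauber dynamics on $\pi$ started from $X^{(0)}_{\pi\text{-GD}}=\mathsf{lift}(\mathbf 1_V)$ and $(X^{(t)}_{\mu\text{-GD}})_{t\ge0}$ the Glauber dynamics on $\mu$ started from $\mathbf 1_V$. Then for every integer $t\ge0$, $X^{(t)}_{\pi\text{-GD}}$ and $\mathsf{lift}(X^{(t)}_{\mu\text{-GD}})$ are identically distributed, and $\mathsf{contr}(X^{(t)}_{\pi\text{-GD}})$ and $X^{(t)}_{\mu\text{-GD}}$ are identically distributed.
   Context: $\mathsf{lift}:\{0,1\}^V\to\{0,1,\star\}^V$ is random: independently per coordinate, $0\mapsto0$, $1\mapsto\star$ w.p. $1-\theta$, $1\mapsto1$ w.p. $\theta$ (applied with fresh independent randomness). $\mathsf{contr}$: $0\mapsto0$, $1,\star\mapsto1$ coordinatewise. $\pi$ is the law of $\mathsf{lift}(X)$ for $X\sim\mu$. Glauber dynamics on a distribution $\nu$: pick $v\in V$ uniformly and resample coordinate $v$ from $\nu$ conditioned on the other coordinates. *)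

theory Defs
  imports "HOL-Probability.Probability"
begin

datatype spin = Zero | One | Star

definition lift_coord :: "real \<Rightarrow> bool \<Rightarrow> spin pmf" where
  "lift_coord \<theta> b = (if b then map_pmf (\<lambda>c. if c then One else Star) (bernoulli_pmf \<theta>)
                       else return_pmf Zero)"

definition lift :: "real \<Rightarrow> ('v::finite \<Rightarrow> bool) \<Rightarrow> ('v \<Rightarrow> spin) pmf" where
  "lift \<theta> x = Pi_pmf UNIV Zero (\<lambda>v. lift_coord \<theta> (x v))"

definition contr :: "('v \<Rightarrow> spin) \<Rightarrow> ('v \<Rightarrow> bool)" where
  "contr z = (\<lambda>v. z v \<noteq> Zero)"

text \<open>pi = law of lift(X) for X ~ mu (fresh randomness).\<close>
definition lifted_dist :: "real \<Rightarrow> ('v::finite \<Rightarrow> bool) pmf \<Rightarrow> ('v \<Rightarrow> spin) pmf" where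
  "lifted_dist \<theta> \<mu> = bind_pmf \<mu> (lift \<theta>)"

text \<open>Convention: if the conditioning event has nu-probability 0,
  the state is left unchanged.\<close>
definition glauber_step :: "('v::finite \<Rightarrow> 'b) pmf \<Rightarrow> ('v \<Rightarrow> 'b) \<Rightarrow> ('v \<Rightarrow> 'b) pmf" where
  "glauber_step \<nu> x = bind_pmf (pmf_of_set (UNIV :: 'v set)) (\<lambda>v.
      let S = {y. \<forall>w. w \<noteq> v \<longrightarrow> y w = x w} in
      if set_pmf \<nu> \<inter> S = {} then return_pmf x else cond_pmf \<nu> S)"

primrec glauber_run :: "('v::finite \<Rightarrow> 'b) pmf \<Rightarrow> ('v \<Rightarrow> 'b) pmf \<Rightarrow> nat \<Rightarrow> ('v \<Rightarrow> 'b) pmf" where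
  "glauber_run \<nu> init 0 = init"
| "glauber_run \<nu> init (Suc t) = bind_pmf (glauber_run \<nu> init t) (glauber_step \<nu>)"

end

theory Submission imports Defs begin


definition wc :: "real \<Rightarrow> spin \<Rightarrow> real" where
  "wc \<theta> s = (case s of Zero \<Rightarrow> 1 | One \<Rightarrow> \<theta> | Star \<Rightarrow> 1 - \<theta>)"

definition W :: "real \<Rightarrow> ('v::finite \<Rightarrow> spin) \<Rightarrow> real" where
  "W \<theta> y = (\<Prod>v\<in>UNIV. wc \<theta> (y v))"

lemma pmf_lift_coord:
  assumes "0 \<le> \<theta>" "\<theta> \<le> 1"
  shows "pmf (lift_coord \<theta> b) s = (if (s \<noteq> Zero) = b then wc \<theta> s else 0)"
proof (cases b)
  case True
  have inj: "inj (\<lambda>c. if c then One else Star)" by (auto simp: inj_def split: if_splits)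
  show ?thesis
  proof (cases s)
    case Zero
    then show ?thesis using True by (auto simp: lift_coord_def wc_def intro!: pmf_map_outside split: if_splits)
  next
    case One
    then show ?thesis using True assms pmf_map_inj'[OF inj, of "bernoulli_pmf \<theta>" True]
      by (simp add: lift_coord_def wc_def)
  next
    case Star
    then show ?thesis using True assms pmf_map_inj'[OF inj, of "bernoulli_pmf \<theta>" False]
      by (simp add: lift_coord_def wc_def)
  qed
next
  case False
  then show ?thesis by (cases s) (auto simp: lift_coord_def wc_def pmf_return)
qed

lemma wc_pos: "0 < \<theta> \<Longrightarrow> \<theta> < 1 \<Longrightarrow> wc \<theta> s > 0"
  by (cases s) (auto simp: wc_def)

lemma W_pos: "0 < \<theta> \<Longrightarrow> \<theta> < 1 \<Longrightarrow> W \<theta> y > 0"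
  unfolding W_def by (intro prod_pos) (auto intro: wc_pos)

lemma pmf_lift:
  assumes "0 \<le> \<theta>" "\<theta> \<le> 1"
  shows "pmf (lift \<theta> x) y = (if contr y = x then W \<theta> y else 0)"
proof -
  have "pmf (lift \<theta> x) y = (\<Prod>v\<in>UNIV. pmf (lift_coord \<theta> (x v)) (y v))"
    unfolding lift_def by (subst pmf_Pi) auto
  also have "\<dots> = (\<Prod>v\<in>UNIV. (if (y v \<noteq> Zero) = x v then wc \<theta> (y v) else 0))"
    using assms by (simp add: pmf_lift_coord)
  also have "\<dots> = (if contr y = x then W \<theta> y else 0)"
  proof (cases "contr y = x")
    case True
    then show ?thesis by (auto simp: W_def contr_def intro!: prod.cong)
  next
    case False
    then obtain v where "(y v \<noteq> Zero) \<noteq> x v" by (auto simp: contr_def)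
    then show ?thesis using False by (intro trans[OF prod_zero]) auto
  qed
  finally show ?thesis .
qed

lemma pmf_lifted:
  assumes "0 \<le> \<theta>" "\<theta> \<le> 1"
  shows "pmf (lifted_dist \<theta> \<mu>) y = pmf \<mu> (contr y) * W \<theta> y"
proof -
  have "pmf (lifted_dist \<theta> \<mu>) y = (\<integral>x. pmf (lift \<theta> x) y \<partial>measure_pmf \<mu>)"
    unfolding lifted_dist_def by (rule pmf_bind)
  also have "\<dots> = (\<Sum>a\<in>{contr y}. pmf (lift \<theta> a) y * pmf \<mu> a)"
    using assms by (intro integral_measure_pmf_real) (auto simp: pmf_lift split: if_splits)
  also have "\<dots> = pmf \<mu> (contr y) * W \<theta> y" using assms by (simp add: pmf_lift)
  finally show ?thesis .
qed

lemma contr_lift: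
  assumes "0 \<le> \<theta>" "\<theta> \<le> 1"
  shows "map_pmf contr (lift \<theta> x) = return_pmf x"
  using assms by (subst map_pmf_eq_return_pmf_iff) (auto simp: set_pmf_iff pmf_lift split: if_splits)



definition Sx :: "'v \<Rightarrow> ('v \<Rightarrow> 'b) \<Rightarrow> ('v \<Rightarrow> 'b) set" where
  "Sx v x = {y. \<forall>w. w \<noteq> v \<longrightarrow> y w = x w}"

lemma lift_decomp:
  "lift \<theta> (x::'v::finite \<Rightarrow> bool) = bind_pmf (Pi_pmf (UNIV - {v}) Zero (\<lambda>w. lift_coord \<theta> (x w)))
      (\<lambda>f. bind_pmf (lift_coord \<theta> (x v)) (\<lambda>c. return_pmf (f(v := c))))"
proof -
  have "lift \<theta> x = Pi_pmf (insert v (UNIV - {v})) Zero (\<lambda>w. lift_coord \<theta> (x w))"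
    unfolding lift_def by (simp add: insert_absorb)
  also have "\<dots> = bind_pmf (lift_coord \<theta> (x v)) (\<lambda>c. bind_pmf (Pi_pmf (UNIV - {v}) Zero (\<lambda>w. lift_coord \<theta> (x w)))
      (\<lambda>f. return_pmf (f(v := c))))"
    by (subst Pi_pmf_insert') auto
  finally show ?thesis by (simp add: bind_commute_pmf[where A="lift_coord \<theta> (x v)"])
qed

lemma W_upd:
  "W \<theta> (f(v := a)) = wc \<theta> a * (\<Prod>w\<in>UNIV - {v}. wc \<theta> (f w))"
  unfolding W_def by (subst prod.remove[of UNIV v]) (auto intro!: prod.cong)

lemma contr_upd: "contr (f(v := a)) = (contr f)(v := (a \<noteq> Zero))"
  by (auto simp: contr_def)



lemma key_v:
  fixes \<mu> :: "('v::finite \<Rightarrow> bool) pmf"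
  assumes th: "0 < \<theta>" "\<theta> < 1"
  shows "bind_pmf (lift \<theta> x) (\<lambda>z. if set_pmf (lifted_dist \<theta> \<mu>) \<inter> Sx v z = {} then return_pmf z
            else cond_pmf (lifted_dist \<theta> \<mu>) (Sx v z))
   = bind_pmf (if set_pmf \<mu> \<inter> Sx v x = {} then return_pmf x else cond_pmf \<mu> (Sx v x)) (lift \<theta>)"
    (is "bind_pmf _ ?F = _")
proof -
  define \<pi> where "\<pi> = lifted_dist \<theta> \<mu>"
  have th': "0 \<le> \<theta>" "\<theta> \<le> 1" using th by auto
  define m0 where "m0 = pmf \<mu> (x(v := False))"
  define m1 where "m1 = pmf \<mu> (x(v := True))"
  have Sxx: "Sx v x = {x(v := False), x(v := True)}"
  proof -
    { fix y assume "y \<in> Sx v x"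
      hence "y = x(v := y v)" by (auto simp: Sx_def fun_eq_iff)
      hence "y \<in> {x(v := False), x(v := True)}" by (cases "y v") auto }
    thus ?thesis by (auto simp: Sx_def)
  qed
  show ?thesis
  proof (cases "set_pmf \<mu> \<inter> Sx v x = {}")
    case True
    have "?F z = return_pmf z" if z: "z \<in> set_pmf (lift \<theta> x)" for z
    proof -
      have cz: "contr z = x" using z th' by (auto simp: set_pmf_iff pmf_lift split: if_splits)
      have "set_pmf (lifted_dist \<theta> \<mu>) \<inter> Sx v z = {}"
      proof (rule ccontr)
        assume "set_pmf (lifted_dist \<theta> \<mu>) \<inter> Sx v z \<noteq> {}"
        then obtain y where y: "y \<in> set_pmf (lifted_dist \<theta> \<mu>)" "y \<in> Sx v z" by auto
        have "contr y \<in> Sx v x" using y(2) cz by (auto simp: Sx_def contr_def)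
        hence "pmf \<mu> (contr y) = 0" using True by (auto simp: set_pmf_iff)
        thus False using y(1) th' by (auto simp: set_pmf_iff pmf_lifted)
      qed
      thus ?thesis by simp
    qed
    hence "bind_pmf (lift \<theta> x) ?F = bind_pmf (lift \<theta> x) return_pmf"
      by (intro bind_pmf_cong) auto
    thus ?thesis using True by (simp add: bind_return_pmf bind_return_pmf')
  next
    case False
    have m01: "m0 + m1 > 0"
    proof -
      obtain y where "y \<in> set_pmf \<mu>" "y \<in> Sx v x" using False by auto
      hence "pmf \<mu> y > 0" "y = x(v := False) \<or> y = x(v := True)" using Sxx
        by (auto simp: pmf_positive_iff)
      moreover have "m0 \<ge> 0" "m1 \<ge> 0" by (auto simp: m0_def m1_def)
      ultimately show ?thesis unfolding m0_def m1_def by (auto intro: add_pos_nonneg add_nonneg_pos)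

    qed
    have m0: "m0 \<ge> 0" "m1 \<ge> 0" by (auto simp: m0_def m1_def)
    define p where "p = m1 / (m0 + m1)"
    have p: "0 \<le> p" "p \<le> 1" using m0 m01 by (auto simp: p_def)
    define \<beta> where "\<beta> = bernoulli_pmf p"
    have injx: "inj (\<lambda>b. x(v := b))" by (auto simp: inj_def fun_eq_iff)
    have G: "cond_pmf \<mu> (Sx v x) = map_pmf (\<lambda>b. x(v := b)) \<beta>"
    proof (rule pmf_eqI)
      fix y
      show "pmf (cond_pmf \<mu> (Sx v x)) y = pmf (map_pmf (\<lambda>b. x(v := b)) \<beta>) y"
      proof (cases "y \<in> Sx v x")
        case True
        have meas: "measure \<mu> (Sx v x) = m0 + m1"
          unfolding Sxx by (subst measure_measure_pmf_finite) (auto simp: m0_def m1_def fun_eq_iff)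
        have yy: "y = x(v := y v)" using True by (auto simp: Sx_def fun_eq_iff)
        have "pmf (map_pmf (\<lambda>b. x(v := b)) \<beta>) y = pmf \<beta> (y v)"
          by (subst yy, rule pmf_map_inj'[OF injx])
        also have "\<dots> = pmf \<mu> y / (m0 + m1)"
          using p m01 by (cases "y v") (auto simp: \<beta>_def p_def m0_def m1_def field_simps, (subst yy, simp)+)
        finally show ?thesis using True by (simp add: pmf_cond[OF False] meas)
      next
        case False
        hence "y \<notin> range (\<lambda>b. x(v := b))" by (auto simp: Sx_def)
        hence "pmf (map_pmf (\<lambda>b. x(v := b)) \<beta>) y = 0" by (intro pmf_map_outside) auto
        then show ?thesis using False by (simp add: pmf_cond[OF \<open>set_pmf \<mu> \<inter> Sx v x \<noteq> {}\<close>])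
      qed
    qed
    define P where "P = Pi_pmf (UNIV - {v}) Zero (\<lambda>w. lift_coord \<theta> (x w))"
    define K where "K f = map_pmf (\<lambda>c. f(v:=c)) (bind_pmf \<beta> (lift_coord \<theta>))" for f :: "'v \<Rightarrow> spin"
    have PB: "Pi_pmf (UNIV - {v}) Zero (\<lambda>w. lift_coord \<theta> ((x(v:=b)) w)) = P" for b
      unfolding P_def by (rule Pi_pmf_cong) auto
    have RHS: "bind_pmf (cond_pmf \<mu> (Sx v x)) (lift \<theta>) = bind_pmf P K"
    proof -
      have "bind_pmf (cond_pmf \<mu> (Sx v x)) (lift \<theta>) = bind_pmf \<beta> (\<lambda>b. lift \<theta> (x(v:=b)))"
        by (simp add: G bind_map_pmf)
      also have "\<dots> = bind_pmf \<beta> (\<lambda>b. bind_pmf P (\<lambda>f. bind_pmf (lift_coord \<theta> b) (\<lambda>c. return_pmf (f(v := c)))))"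
        by (intro bind_pmf_cong refl) (simp only: lift_decomp[of \<theta> _ v] PB fun_upd_same)
      also have "\<dots> = bind_pmf P (\<lambda>f. bind_pmf \<beta> (\<lambda>b. bind_pmf (lift_coord \<theta> b) (\<lambda>c. return_pmf (f(v := c)))))"
        by (rule bind_commute_pmf)
      also have "\<dots> = bind_pmf P K"
        unfolding K_def map_pmf_def bind_assoc_pmf by (rule refl)
      finally show ?thesis .
    qed
    have core: "?F (f(v:=c)) = K f" if f: "f \<in> set_pmf P" for f c
    proof -
      have pf: "pmf P f \<noteq> 0" using f by (simp add: set_pmf_iff)
      have fv: "f v = Zero" using pf by (auto simp: P_def pmf_Pi split: if_splits)
      have fw: "(f w \<noteq> Zero) = x w" if "w \<noteq> v" for w
      proof -
        have "(\<Prod>w\<in>UNIV - {v}. pmf (lift_coord \<theta> (x w)) (f w)) \<noteq> 0"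
          using pf by (auto simp: P_def pmf_Pi split: if_splits)
        hence "pmf (lift_coord \<theta> (x w)) (f w) \<noteq> 0" using that by auto
        thus ?thesis using th' by (simp add: pmf_lift_coord split: if_splits)
      qed
      have Seq: "Sx v (f(v:=c)) = Sx v f" by (auto simp: Sx_def)
      define R where "R = (\<Prod>w\<in>UNIV - {v}. wc \<theta> (f w))"
      have R: "R > 0" unfolding R_def using th by (intro prod_pos) (auto intro: wc_pos)
      have cf: "contr (f(v:=a)) = x(v := (a \<noteq> Zero))" for a
        using fw by (auto simp: contr_def fun_eq_iff)
      have ppi: "pmf \<pi> (f(v:=a)) = pmf \<mu> (x(v := (a \<noteq> Zero))) * (wc \<theta> a * R)" for a
        unfolding \<pi>_def using th' by (simp add: pmf_lifted cf W_upd R_def)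
      have ne: "set_pmf \<pi> \<inter> Sx v f \<noteq> {}"
      proof (cases "m0 > 0")
        case True
        hence "pmf \<pi> (f(v:=Zero)) > 0" using R by (simp add: ppi m0_def wc_def)
        moreover have "f(v:=Zero) \<in> Sx v f" by (simp add: Sx_def)
        ultimately show ?thesis by (auto simp: pmf_positive_iff)
      next
        case False
        hence "m1 > 0" using m0 m01 by auto
        hence "pmf \<pi> (f(v:=One)) > 0" using R th by (simp add: ppi m1_def wc_def)
        moreover have "f(v:=One) \<in> Sx v f" by (simp add: Sx_def)
        ultimately show ?thesis by (auto simp: pmf_positive_iff)
      qed
      have Sf: "Sx v f = {f(v:=Zero), f(v:=One), f(v:=Star)}"
      proof -
        { fix y assume "y \<in> Sx v f"
          hence "y = f(v := y v)" by (auto simp: Sx_def fun_eq_iff)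
          hence "y \<in> {f(v:=Zero), f(v:=One), f(v:=Star)}" by (cases "y v") auto }
        thus ?thesis by (auto simp: Sx_def)
      qed
      have meas: "measure \<pi> (Sx v f) = R * (m0 + m1)"
        unfolding Sf by (subst measure_measure_pmf_finite)
          (auto simp: fun_eq_iff ppi m0_def m1_def wc_def algebra_simps)
      have injf: "inj (\<lambda>c. f(v := c))" by (auto simp: inj_def fun_eq_iff)
      have C: "cond_pmf \<pi> (Sx v f) = K f"
      proof (rule pmf_eqI)
        fix y
        show "pmf (cond_pmf \<pi> (Sx v f)) y = pmf (K f) y"
        proof (cases "y \<in> Sx v f")
          case True
          have yy: "y = f(v := y v)" using True by (auto simp: Sx_def fun_eq_iff)
          have "pmf (K f) y = pmf (bind_pmf \<beta> (lift_coord \<theta>)) (y v)"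
            unfolding K_def by (subst yy, rule pmf_map_inj'[OF injf])
          also have "\<dots> = pmf (lift_coord \<theta> True) (y v) * p + pmf (lift_coord \<theta> False) (y v) * (1 - p)"
            using p by (simp add: pmf_bind \<beta>_def)
          also have "\<dots> = pmf \<mu> (x(v := (y v \<noteq> Zero))) * wc \<theta> (y v) / (m0 + m1)"
            using p m01 th' by (cases "y v")
               (auto simp: pmf_lift_coord wc_def p_def m0_def m1_def field_simps)
          also have "\<dots> = pmf \<pi> y / (R * (m0 + m1))"
            using ppi[of "y v"] yy R m01 by simp
          
          finally show ?thesis using True by (simp add: pmf_cond[OF ne] meas)
        next
          case False
          hence "y \<notin> range (\<lambda>c. f(v := c))" by (auto simp: Sx_def)
          hence "pmf (K f) y = 0" unfolding K_def by (intro pmf_map_outside) auto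
          then show ?thesis using False by (simp add: pmf_cond[OF ne])
        qed
      qed
      show ?thesis using ne C by (simp add: Seq \<pi>_def)
    qed
    have "bind_pmf (lift \<theta> x) ?F = bind_pmf P (\<lambda>f. bind_pmf (lift_coord \<theta> (x v)) (\<lambda>c. ?F (f(v:=c))))"
      by (subst lift_decomp[of \<theta> _ v]) (simp add: P_def bind_assoc_pmf bind_return_pmf)
    also have "\<dots> = bind_pmf P (\<lambda>f. bind_pmf (lift_coord \<theta> (x v)) (\<lambda>c. K f))"
      by (intro bind_pmf_cong refl) (simp add: core)
    also have "\<dots> = bind_pmf P K" by (simp add: bind_pmf_const)
    finally show ?thesis using RHS False by simp
  qed
qed


lemma key:
  fixes \<mu> :: "('v::finite \<Rightarrow> bool) pmf"
  assumes th: "0 < \<theta>" "\<theta> < 1"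
  shows "bind_pmf (lift \<theta> x) (glauber_step (lifted_dist \<theta> \<mu>)) = bind_pmf (glauber_step \<mu> x) (lift \<theta>)"
proof -
  have "bind_pmf (lift \<theta> x) (glauber_step (lifted_dist \<theta> \<mu>)) =
     bind_pmf (pmf_of_set UNIV) (\<lambda>v. bind_pmf (lift \<theta> x) (\<lambda>z. if set_pmf (lifted_dist \<theta> \<mu>) \<inter> Sx v z = {} then return_pmf z
            else cond_pmf (lifted_dist \<theta> \<mu>) (Sx v z)))"
    unfolding glauber_step_def Let_def Sx_def by (rule bind_commute_pmf)
  also have "\<dots> = bind_pmf (pmf_of_set UNIV) (\<lambda>v. bind_pmf (if set_pmf \<mu> \<inter> Sx v x = {} then return_pmf x else cond_pmf \<mu> (Sx v x)) (lift \<theta>))"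
    using th by (intro bind_pmf_cong refl key_v)
  also have "\<dots> = bind_pmf (glauber_step \<mu> x) (lift \<theta>)"
    unfolding glauber_step_def Let_def Sx_def by (simp add: bind_assoc_pmf)
  finally show ?thesis .
qed

theorem lemma4p1:
  fixes \<mu> :: "('v::finite \<Rightarrow> bool) pmf" and \<theta> :: real and t :: nat
  assumes "0 < \<theta>" and "\<theta> < 1"
  shows "glauber_run (lifted_dist \<theta> \<mu>) (lift \<theta> (\<lambda>_. True)) t
           = bind_pmf (glauber_run \<mu> (return_pmf (\<lambda>_. True)) t) (lift \<theta>)
       \<and> map_pmf contr (glauber_run (lifted_dist \<theta> \<mu>) (lift \<theta> (\<lambda>_. True)) t)
           = glauber_run \<mu> (return_pmf (\<lambda>_. True)) t"
proof -
  have 1: "glauber_run (lifted_dist \<theta> \<mu>) (lift \<theta> (\<lambda>_. True)) t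
           = bind_pmf (glauber_run \<mu> (return_pmf (\<lambda>_. True)) t) (lift \<theta>)"
  proof (induction t)
    case 0
    then show ?case by (simp add: bind_return_pmf)
  next
    case (Suc t)
    then show ?case using assms by (simp add: bind_assoc_pmf key)
  qed
  have 2: "map_pmf contr (bind_pmf M (lift \<theta>)) = M" for M :: "('v \<Rightarrow> bool) pmf"
    using assms by (simp add: map_bind_pmf contr_lift bind_return_pmf')
  show ?thesis using 1 2 by simp
qed


end
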